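(* Let $x,y\in\mathbb{B}^2\setminus\{0\}$ be such that $0,x,y$ are noncollinear and $|x|\ne|y|$. Let $S^1(a,r_a)$ be the circle through $x,y,x^*,y^*$, where $a=i\frac{y(1+|x|^2)-x(1+|y|^2)}{2(x_2y_1-x_1y_2)}$, $r_a=\frac{|x-y|\,\big|x|y|^2-y\big|}{2|y||x_1y_2-x_2y_1|}$ (with $x=x_1+ix_2$, $y=y_1+iy_2$); it is orthogonal to $S^1$. Let $\{x_*,y_*\}=S^1\cap S^1(a,r_a)$, labelled so that $x_*,x,y,y_*$ occur in this order on the arc of $S^1(a,r_a)$ inside $\overline{\mathbb{B}^2}$. Let $w=L(x,y)\cap L(x^*,y^* )$, $u=L(x,y^* )\cap L(y,x^* )$, $v=L(x,x_* )\cap L(y,y_* )$, $s=L(x,y_* )\cap L(y,x_* )$, $t=L(x_*,y^* )\cap L(y_*,x^* )$, $k=L(x_*,x^* )\cap L(y_*,y^* )$. Let $S^1(w,r_w)$ be the circle centred at $w$ orthogonal to $S^1(a,r_a)$, and let $z$ be the point of $S^1(w,r_w)\cap S^1(a,r_a)$ in $\mathbb{B}^2$. Then: (1) the circle $S^1(w,r_w)$ is orthogonal to $S^1$, $z$ is the hyperbolic midpoint of the hyperbolic segment $J[x,y]$, and $$w=\frac{y(1-|x|^2)-x(1-|y|^2)}{|y|^2-|x|^2},\qquad r_w=\frac{|x-y|\sqrt{(1-|x|^2)(1-|y|^2)}}{\big||y|^2-|x|^2\big|};$$ (2) the points $v,s,t,k$ lie on the line $L(0,z)$, and $u$ is the intersection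 point of the lines $L(0,z)$ and $L(x_*,y_* )$, where $$u=\frac{y(1-|x|^2)+x(1-|y|^2)}{1-|x|^2|y|^2}.$$
   Context: $\mathbb{B}^2$ is the unit disk, $S^1$ the unit circle, $S^1(c,r)$ the circle with centre $c$ and radius $r$, $L(p,q)$ the line through $p,q$. For $x\ne0$, $x^*=x/|x|^2$ is the inversion of $x$ in $S^1$. Points are identified with complex numbers. The hyperbolic distance on $\mathbb{B}^2$ satisfies $\sinh\frac{\rho(x,y)}{2}=\frac{|x-y|}{\sqrt{1-|x|^2}\sqrt{1-|y|^2}}$; $J[x,y]$ is the arc of $S^1(a,r_a)$ between $x$ and $y$, and its hyperbolic midpoint is the $z\in J[x,y]$ with $\rho(x,z)=\rho(z,y)$. *)

theory Defs
  imports "HOL-Analysis.Analysis"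
begin

definition inv_pt :: "complex \<Rightarrow> complex" where
  "inv_pt x = x / complex_of_real ((cmod x)\<^sup>2)"

definition line_through :: "complex \<Rightarrow> complex \<Rightarrow> complex set" where
  "line_through p q = {p + complex_of_real t * (q - p) | t. True}"

definition orthogonal_circles :: "complex \<Rightarrow> real \<Rightarrow> complex \<Rightarrow> real \<Rightarrow> bool" where
  "orthogonal_circles c1 r1 c2 r2 \<longleftrightarrow>
     r1 > 0 \<and> r2 > 0 \<and> (dist c1 c2)\<^sup>2 = r1\<^sup>2 + r2\<^sup>2"

definition hrho :: "complex \<Rightarrow> complex \<Rightarrow> real" where
  "hrho x y = 2 * arsinh (cmod (x - y) / (sqrt (1 - (cmod x)\<^sup>2) * sqrt (1 - (cmod y)\<^sup>2)))"

text \<open>The (minor) arc of the circle S(c,r) between p and q: points of the circle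
  whose radius vector lies in the cone spanned by p - c and q - c.\<close>
definition circ_arc :: "complex \<Rightarrow> real \<Rightarrow> complex \<Rightarrow> complex \<Rightarrow> complex set" where
  "circ_arc c r p q = {e \<in> sphere c r. \<exists>\<alpha> \<beta>::real. \<alpha> \<ge> 0 \<and> \<beta> \<ge> 0 \<and>
       e - c = complex_of_real \<alpha> * (p - c) + complex_of_real \<beta> * (q - c)}"

end

theory Submission
  imports Defs
begin


lemma line_iff: "z \<in> line_through p q \<longleftrightarrow> (\<exists>t::real. z = p + of_real t * (q - p))"
  unfolding line_through_def by auto

lemma line_sym: "z \<in> line_through p q \<Longrightarrow> z \<in> line_through q p"
proof -
  assume "z \<in> line_through p q"
  then obtain t where t: "z = p + of_real t * (q - p)" by (auto simp: line_iff)
  have "z = q + of_real (1 - t) * (p - q)" using t by (simp add: algebra_simps)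
  thus ?thesis unfolding line_iff by blast
qed

lemma cnj_unit: "cmod p = 1 \<Longrightarrow> p * cnj p = 1"
  by (metis complex_norm_square mult_1 of_real_1 power2_eq_square)

lemma chord_eq:
  assumes "cmod p = 1" "cmod q = 1" "z \<in> line_through p q"
  shows "z + p * q * cnj z = p + q"
proof -
  obtain t where t: "z = p + of_real t * (q - p)" using assms(3) by (auto simp: line_iff)
  have pp: "p * cnj p = 1" using assms(1) by (rule cnj_unit)
  have qq: "q * cnj q = 1" using assms(2) by (rule cnj_unit)
  have "p * q * cnj z = q * (p * cnj p) + of_real t * (p * (q * cnj q) - q * (p * cnj p))"
    by (simp add: t algebra_simps)
  also have "\<dots> = q + of_real t * (p - q)" by (simp add: pp qq)
  finally show ?thesis by (simp add: t algebra_simps)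
qed

lemma chord_det:
  assumes u: "cmod p1 = 1" "cmod p2 = 1" "cmod p3 = 1" "cmod p4 = 1"
    and dist: "p1 \<noteq> p3" "p1 \<noteq> p4"
    and d: "d \<in> line_through p1 p2" "d \<in> line_through p3 p4"
  shows "p1 * p2 \<noteq> p3 * p4" "cnj d = (p1 + p2 - p3 - p4) / (p1 * p2 - p3 * p4)"
    "d = p1 + p2 - p1 * p2 * cnj d"
proof -
  have e1: "d + p1 * p2 * cnj d = p1 + p2" using chord_eq u d by blast
  have e2: "d + p3 * p4 * cnj d = p3 + p4" using chord_eq u d by blast
  show ne: "p1 * p2 \<noteq> p3 * p4"
  proof
    assume h: "p1 * p2 = p3 * p4"
    then have s: "p1 + p2 = p3 + p4" using e1 e2 by simp
    have "(p1 - p3) * (p1 - p4) = p1 * p1 - p1 * (p3 + p4) + p3 * p4" by (simp add: algebra_simps)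
    also have "\<dots> = 0" unfolding s[symmetric] h[symmetric] by (simp add: algebra_simps)
    finally show False using dist by simp
  qed
  have "cnj d * (p1 * p2 - p3 * p4) = p1 + p2 - p3 - p4"
    using e1 e2 by (simp add: algebra_simps) (metis add_diff_cancel_left' diff_diff_eq2 e1 e2)
  then show "cnj d = (p1 + p2 - p3 - p4) / (p1 * p2 - p3 * p4)" using ne by (simp add: field_simps)
  show "d = p1 + p2 - p1 * p2 * cnj d" using e1 by (simp add: algebra_simps)
qed

lemma polar_unit:
  assumes u: "cmod p1 = 1" "cmod p2 = 1" "cmod p3 = 1" "cmod p4 = 1"
    and dist: "p1 \<noteq> p2" "p1 \<noteq> p3" "p1 \<noteq> p4" "p2 \<noteq> p3" "p2 \<noteq> p4" "p3 \<noteq> p4"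
    and d: "d \<in> line_through p1 p2" "d \<in> line_through p3 p4"
    and e: "e \<in> line_through p1 p3" "e \<in> line_through p2 p4"
  shows "e * cnj d + cnj e * d = 2"
proof -
  note D = chord_det[OF u(1,2,3,4) dist(2,3) d]
  note E = chord_det[OF u(1,3,2,4) dist(1,3) e]
  define A where "A = p1 * p2 - p3 * p4"
  define B where "B = p1 * p3 - p2 * p4"
  have A: "A \<noteq> 0" using D(1) by (simp add: A_def)
  have B: "B \<noteq> 0" using E(1) by (simp add: B_def)
  have cd: "cnj d = (p1 + p2 - p3 - p4) / A" using D(2) by (simp add: A_def)
  have ce: "cnj e = (p1 + p3 - p2 - p4) / B" using E(2) by (simp add: B_def)
  have "e * cnj d + cnj e * d = (p1 + p3 - p1 * p3 * cnj e) * cnj d + cnj e * (p1 + p2 - p1 * p2 * cnj d)"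
    using D(3) E(3) by metis
  also have "\<dots> = ((p1 + p3) * ((p1 + p2 - p3 - p4) * B) - p1 * p3 * (p1 + p3 - p2 - p4) * (p1 + p2 - p3 - p4)
      + (p1 + p3 - p2 - p4) * A * (p1 + p2) - p1 * p2 * (p1 + p3 - p2 - p4) * (p1 + p2 - p3 - p4)) / (A * B)"
    unfolding cd ce using A B by (simp add: field_simps)
  also have "\<dots> = (2 * (A * B)) / (A * B)"
    unfolding A_def B_def by (rule arg_cong[where f="\<lambda>t. t / _"]) algebra
  also have "\<dots> = 2" using A B by simp
  finally show ?thesis .
qed


lemma line_affine:
  assumes "z \<in> line_through p q" "r \<noteq> 0"
  shows "(z - c) / of_real r \<in> line_through ((p - c) / of_real r) ((q - c) / of_real r)"
proof -
  obtain t where t: "z = p + of_real t * (q - p)" using assms(1) by (auto simp: line_iff)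
  have "(z - c) / of_real r = (p - c) / of_real r + of_real t * ((q - c) / of_real r - (p - c) / of_real r)"
    using assms(2) by (simp add: t field_simps)
  thus ?thesis unfolding line_iff by blast
qed

lemma norm_shift: "r > 0 \<Longrightarrow> cmod (p - c) = r \<Longrightarrow> cmod ((p - c) / of_real r) = 1"
  by (simp add: norm_divide)

lemma shift_inj: "r > 0 \<Longrightarrow> p \<noteq> q \<Longrightarrow> (p - c) / complex_of_real r \<noteq> (q - c) / of_real r"
  by (simp add: field_simps)

lemma re_plus_cnj: "Re (w + cnj w) = 2 * Re w" by simp

lemma aux_div: "(r::real) \<noteq> 0 \<Longrightarrow> 2 * X / r\<^sup>2 = 2 \<Longrightarrow> X = r\<^sup>2"
  by (simp add: field_simps)

lemma polar_gen:
  assumes r: "r > 0" and u: "cmod (p1 - c) = r" "cmod (p2 - c) = r" "cmod (p3 - c) = r" "cmod (p4 - c) = r"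
    and dist: "p1 \<noteq> p2" "p1 \<noteq> p3" "p1 \<noteq> p4" "p2 \<noteq> p3" "p2 \<noteq> p4" "p3 \<noteq> p4"
    and d: "d \<in> line_through p1 p2" "d \<in> line_through p3 p4"
    and e: "e \<in> line_through p1 p3" "e \<in> line_through p2 p4"
  shows "Re ((e - c) * cnj (d - c)) = r\<^sup>2"
proof -
  define f where "f = (\<lambda>p. (p - c) / complex_of_real r)"
  have rr: "r \<noteq> 0" using r by simp
  have "f e * cnj (f d) + cnj (f e) * f d = 2"
    unfolding f_def
    by (rule polar_unit[OF norm_shift[OF r u(1)] norm_shift[OF r u(2)] norm_shift[OF r u(3)] norm_shift[OF r u(4)]
          shift_inj[OF r dist(1)] shift_inj[OF r dist(2)] shift_inj[OF r dist(3)] shift_inj[OF r dist(4)]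
          shift_inj[OF r dist(5)] shift_inj[OF r dist(6)]
          line_affine[OF d(1) rr] line_affine[OF d(2) rr] line_affine[OF e(1) rr] line_affine[OF e(2) rr]])
  moreover have "f e * cnj (f d) + cnj (f e) * f d
      = ((e - c) * cnj (d - c) + cnj ((e - c) * cnj (d - c))) / of_real (r\<^sup>2)"
    unfolding f_def using rr by (simp add: power2_eq_square field_simps)
  ultimately have "Re (((e - c) * cnj (d - c) + cnj ((e - c) * cnj (d - c))) / of_real (r\<^sup>2)) = 2" by simp
  then have "2 * Re ((e - c) * cnj (d - c)) / r\<^sup>2 = 2"
    by (simp only: Re_divide_of_real re_plus_cnj)
  then show ?thesis using rr aux_div by blast
qed

lemma uniq_gen:
  assumes r: "r > 0" and u: "cmod (p1 - c) = r" "cmod (p2 - c) = r" "cmod (p3 - c) = r" "cmod (p4 - c) = r"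
    and dist: "p1 \<noteq> p3" "p1 \<noteq> p4"
    and d: "d \<in> line_through p1 p2" "d \<in> line_through p3 p4"
    and d2: "d2 \<in> line_through p1 p2" "d2 \<in> line_through p3 p4"
  shows "d2 = d"
proof -
  define f where "f = (\<lambda>p. (p - c) / complex_of_real r)"
  have rr: "r \<noteq> 0" using r by simp
  note U = norm_shift[OF r u(1)] norm_shift[OF r u(2)] norm_shift[OF r u(3)] norm_shift[OF r u(4)]
    shift_inj[OF r dist(1)] shift_inj[OF r dist(2)]
  have "cnj (f d) = cnj (f d2)" unfolding f_def
    using chord_det(2)[OF U line_affine[OF d(1) rr] line_affine[OF d(2) rr]]
      chord_det(2)[OF U line_affine[OF d2(1) rr] line_affine[OF d2(2) rr]] by simp
  then have "f d = f d2" by simp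
  then show ?thesis unfolding f_def using rr by (simp add: field_simps)
qed

lemma perp_par:
  assumes "a \<noteq> 0" "Re (p * cnj a) = 0" "Re (q * cnj a) = 0" "q \<noteq> 0"
  shows "\<exists>t::real. p = of_real t * q"
proof -
  have a: "Re a \<noteq> 0 \<or> Im a \<noteq> 0" using assms(1) complex_eq_iff by auto
  have h1: "Re p * Re a + Im p * Im a = 0" using assms(2) by simp
  have h2: "Re q * Re a + Im q * Im a = 0" using assms(3) by simp
  have cr: "Re p * Im q - Im p * Re q = 0"
  proof -
    have "Re a * (Re p * Im q - Im p * Re q) = (Re p * Re a + Im p * Im a) * Im q - Im p * (Re q * Re a + Im q * Im a)"
      by (simp add: algebra_simps)
    then have e1: "Re a * (Re p * Im q - Im p * Re q) = 0" unfolding h1 h2 by simp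
    have "Im a * (Re p * Im q - Im p * Re q) = Re p * (Re q * Re a + Im q * Im a) - Re q * (Re p * Re a + Im p * Im a)"
      by (simp add: algebra_simps)
    then have e2: "Im a * (Re p * Im q - Im p * Re q) = 0" unfolding h1 h2 by simp
    show ?thesis using e1 e2 a by auto
  qed
  have qn: "Re q ^2 + Im q ^2 \<noteq> 0" using assms(4) complex_eq_iff
    by (metis add_cancel_right_right power_zero_numeral sum_power2_eq_zero_iff zero_complex.simps)
  define t where "t = (Re p * Re q + Im p * Im q) / (Re q ^2 + Im q ^2)"
  have "p = of_real t * q"
  proof (rule complex_eqI)
    have "Re p * (Re q ^2 + Im q ^2) - (Re p * Re q + Im p * Im q) * Re q = Im q * (Re p * Im q - Im p * Re q)"
      by (simp add: algebra_simps power2_eq_square)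
    then have "Re p * (Re q ^2 + Im q ^2) = (Re p * Re q + Im p * Im q) * Re q" unfolding cr by simp
    then show "Re p = Re (complex_of_real t * q)" unfolding t_def using qn by (simp add: field_simps)
    have "Im p * (Re q ^2 + Im q ^2) - (Re p * Re q + Im p * Im q) * Im q = - Re q * (Re p * Im q - Im p * Re q)"
      by (simp add: algebra_simps power2_eq_square)
    then have "Im p * (Re q ^2 + Im q ^2) = (Re p * Re q + Im p * Im q) * Im q" unfolding cr by simp
    then show "Im p = Im (complex_of_real t * q)" unfolding t_def using qn by (simp add: field_simps)
  qed
  thus ?thesis by blast
qed

lemma dist_exp: "(cmod (e - a))\<^sup>2 = (cmod e)\<^sup>2 - 2 * Re (e * cnj a) + (cmod a)\<^sup>2"
  unfolding cmod_power2 by (simp add: power2_eq_square algebra_simps)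




definition cross :: "complex \<Rightarrow> complex \<Rightarrow> real" where
  "cross p q = Re p * Im q - Im p * Re q"

lemma cone_side:
  assumes r: "r > 0" and n: "cmod u1 = r" "cmod u2 = r" "cmod v = r"
    and c: "cross u1 u2 \<noteq> 0"
    and side: "cross (u2 - u1) (v - u1) * cross u1 u2 < 0"
  shows "\<exists>\<alpha> \<beta>::real. \<alpha> \<ge> 0 \<and> \<beta> \<ge> 0 \<and> v = of_real \<alpha> * u1 + of_real \<beta> * u2"
proof -
  define C where "C = cross u1 u2"
  define \<alpha> where "\<alpha> = cross v u2 / C"
  define \<beta> where "\<beta> = cross u1 v / C"
  have C: "C \<noteq> 0" using c C_def by simp
  have v: "v = of_real \<alpha> * u1 + of_real \<beta> * u2"
  proof (rule complex_eqI)
    have e1: "C * Re v = cross v u2 * Re u1 + cross u1 v * Re u2" unfolding C_def cross_def by algebra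
    have e2: "C * Im v = cross v u2 * Im u1 + cross u1 v * Im u2" unfolding C_def cross_def by algebra
    have "Re v = (cross v u2 * Re u1 + cross u1 v * Re u2) / C" using e1 C by (simp add: field_simps)
    then show "Re v = Re (complex_of_real \<alpha> * u1 + complex_of_real \<beta> * u2)"
      unfolding \<alpha>_def \<beta>_def by (simp add: add_divide_distrib)
    have "Im v = (cross v u2 * Im u1 + cross u1 v * Im u2) / C" using e2 C by (simp add: field_simps)
    then show "Im v = Im (complex_of_real \<alpha> * u1 + complex_of_real \<beta> * u2)"
      unfolding \<alpha>_def \<beta>_def by (simp add: add_divide_distrib)
  qed
  have "cross (u2 - u1) (v - u1) = C * (1 - \<alpha> - \<beta>)"
  proof -
    have "cross (u2 - u1) (v - u1) = C - cross v u2 - cross u1 v" unfolding C_def cross_def by (simp add: algebra_simps)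
    also have "\<dots> = C * (1 - \<alpha> - \<beta>)" unfolding \<alpha>_def \<beta>_def using C by (simp add: field_simps)
    finally show ?thesis .
  qed
  with side have "C * C * (1 - \<alpha> - \<beta>) < 0" unfolding C_def by (simp add: mult.commute mult.left_commute)
  moreover have "C * C > 0" using C by (auto simp: zero_less_mult_iff linorder_neq_iff)
  ultimately have s: "\<alpha> + \<beta> > 1"
  proof -
    assume h1: "C * C * (1 - \<alpha> - \<beta>) < 0" and h2: "C * C > 0"
    show ?thesis
    proof (rule ccontr)
      assume "\<not> \<alpha> + \<beta> > 1"
      then have "1 - \<alpha> - \<beta> \<ge> 0" by simp
      then have "C * C * (1 - \<alpha> - \<beta>) \<ge> 0" using h2 by simp
      then show False using h1 by simp
    qed
  qed
  have dot: "Re (u1 * cnj u2) \<le> r\<^sup>2"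
  proof -
    have "Re (u1 * cnj u2) \<le> cmod (u1 * cnj u2)" by (rule complex_Re_le_cmod)
    also have "\<dots> = r\<^sup>2" using n by (simp add: norm_mult power2_eq_square)
    finally show ?thesis .
  qed
  have nv: "(cmod v)\<^sup>2 = \<alpha>\<^sup>2 * r\<^sup>2 + \<beta>\<^sup>2 * r\<^sup>2 + 2 * \<alpha> * \<beta> * Re (u1 * cnj u2)"
  proof -
    have "(cmod v)\<^sup>2 = \<alpha>\<^sup>2 * (cmod u1)\<^sup>2 + \<beta>\<^sup>2 * (cmod u2)\<^sup>2 + 2 * \<alpha> * \<beta> * Re (u1 * cnj u2)"
      unfolding v cmod_power2 by (simp add: power2_eq_square algebra_simps)
    then show ?thesis using n by simp
  qed
  have "\<alpha> * \<beta> \<ge> 0"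
  proof (rule ccontr)
    assume "\<not> \<alpha> * \<beta> \<ge> 0"
    then have ab: "\<alpha> * \<beta> < 0" by simp
    have "2 * \<alpha> * \<beta> * Re (u1 * cnj u2) \<ge> 2 * \<alpha> * \<beta> * r\<^sup>2"
      using dot ab by (simp add: mult_left_mono_neg)
    then have "r\<^sup>2 \<ge> r\<^sup>2 * (\<alpha> + \<beta>)\<^sup>2" using nv n by (simp add: power2_eq_square algebra_simps)
    moreover have "(\<alpha> + \<beta>)\<^sup>2 > 1" using one_less_power[OF s, of 2] by simp
    then have "r\<^sup>2 * (\<alpha> + \<beta>)\<^sup>2 > r\<^sup>2 * 1" using r by (intro mult_strict_left_mono) auto
    ultimately show False by simp
  qed
  then have "0 \<le> \<alpha> \<and> 0 \<le> \<beta> \<or> \<alpha> \<le> 0 \<and> \<beta> \<le> 0" by (simp add: zero_le_mult_iff)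
  then have "\<alpha> \<ge> 0 \<and> \<beta> \<ge> 0" using s by auto
  then show ?thesis using v by blast
qed




lemma a_facts:
  fixes x y a :: complex and ra :: real
  assumes D: "Im x * Re y - Re x * Im y \<noteq> 0"
    and ha: "a = \<i> * (y * complex_of_real (1 + (cmod x)\<^sup>2) - x * complex_of_real (1 + (cmod y)\<^sup>2))
                 / complex_of_real (2 * (Im x * Re y - Re x * Im y))"
  shows "Re (x * cnj a) = (1 + (cmod x)\<^sup>2) / 2" "Re (y * cnj a) = (1 + (cmod y)\<^sup>2) / 2"
    "(cmod a)\<^sup>2 = (Re y * (1 + (cmod x)\<^sup>2) - Re x * (1 + (cmod y)\<^sup>2))\<^sup>2 / (2 * (Im x * Re y - Re x * Im y))\<^sup>2
        + (Im y * (1 + (cmod x)\<^sup>2) - Im x * (1 + (cmod y)\<^sup>2))\<^sup>2 / (2 * (Im x * Re y - Re x * Im y))\<^sup>2"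
proof -
  show "Re (x * cnj a) = (1 + (cmod x)\<^sup>2) / 2" unfolding ha cmod_power2 using D
    by (simp add: field_simps, (simp add: algebra_simps power2_eq_square)?)
  show "Re (y * cnj a) = (1 + (cmod y)\<^sup>2) / 2" unfolding ha cmod_power2 using D
    by (simp add: field_simps, (simp add: algebra_simps power2_eq_square)?)
  show "(cmod a)\<^sup>2 = (Re y * (1 + (cmod x)\<^sup>2) - Re x * (1 + (cmod y)\<^sup>2))\<^sup>2 / (2 * (Im x * Re y - Re x * Im y))\<^sup>2
        + (Im y * (1 + (cmod x)\<^sup>2) - Im x * (1 + (cmod y)\<^sup>2))\<^sup>2 / (2 * (Im x * Re y - Re x * Im y))\<^sup>2"
    unfolding ha cmod_power2[of "_ / _"] by (simp add: power_divide add_divide_distrib power2_eq_square algebra_simps)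
qed




lemma poly_a:
  fixes x1 x2 y1 y2 :: real
  shows "((y1*(1+(x1^2+x2^2)) - x1*(1+(y1^2+y2^2)))^2 + (y2*(1+(x1^2+x2^2)) - x2*(1+(y1^2+y2^2)))^2) * (y1^2+y2^2)
   = 4 * (x2*y1 - x1*y2)^2 * (y1^2+y2^2) + ((x1-y1)^2+(x2-y2)^2) * ((x1*(y1^2+y2^2) - y1)^2 + (x2*(y1^2+y2^2) - y2)^2)"
  by algebra

lemma on_C:
  assumes "(cmod a)\<^sup>2 = 1 + ra\<^sup>2" "ra > 0" "Re (e * cnj a) = (1 + (cmod e)\<^sup>2) / 2"
  shows "cmod (e - a) = ra"
proof -
  have "(cmod (e - a))\<^sup>2 = ra\<^sup>2" using assms dist_exp[of e a] by simp
  then show ?thesis using assms(2) by (simp add: power2_eq_iff_nonneg)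
qed

lemma inv_facts:
  assumes "x \<noteq> 0"
  shows "cmod (inv_pt x) = 1 / cmod x" "Re (inv_pt x * cnj a) = Re (x * cnj a) / (cmod x)\<^sup>2"
  unfolding inv_pt_def using assms by (simp_all add: norm_divide Re_divide_of_real norm_mult power2_eq_square)

lemma a_sq:
  fixes x y a :: complex and ra :: real
  assumes D: "Im x * Re y - Re x * Im y \<noteq> 0" and y0: "y \<noteq> 0"
    and ha: "a = \<i> * (y * complex_of_real (1 + (cmod x)\<^sup>2) - x * complex_of_real (1 + (cmod y)\<^sup>2))
                 / complex_of_real (2 * (Im x * Re y - Re x * Im y))"
    and hra: "ra = cmod (x - y) * cmod (x * complex_of_real ((cmod y)\<^sup>2) - y)
                 / (2 * cmod y * \<bar>Re x * Im y - Im x * Re y\<bar>)"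
  shows "(cmod a)\<^sup>2 = 1 + ra\<^sup>2"
proof -
  define x1 where "x1 = Re x"
  define x2 where "x2 = Im x"
  define y1 where "y1 = Re y"
  define y2 where "y2 = Im y"
  define Dd where "Dd = x2 * y1 - x1 * y2"
  have Dd: "Dd \<noteq> 0" using D unfolding Dd_def x1_def x2_def y1_def y2_def by simp
  have Y: "y1^2 + y2^2 > 0" using y0 unfolding y1_def y2_def
    by (metis complex_eq_iff sum_power2_gt_zero_iff zero_complex.sel(1) zero_complex.sel(2))
  have cy: "(cmod y)\<^sup>2 = y1^2 + y2^2" "(cmod x)\<^sup>2 = x1^2 + x2^2"
    unfolding x1_def x2_def y1_def y2_def by (simp_all add: cmod_power2)
  have A0: "(cmod a)\<^sup>2 = (y1*(1+(x1^2+x2^2)) - x1*(1+(y1^2+y2^2)))^2 / (2 * Dd)^2 + (y2*(1+(x1^2+x2^2)) - x2*(1+(y1^2+y2^2)))^2 / (2 * Dd)^2"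
    using a_facts(3)[OF D ha] unfolding cy(1) cy(2) x1_def[symmetric] x2_def[symmetric] y1_def[symmetric]
      y2_def[symmetric] Dd_def[symmetric] .
  have A: "(cmod a)\<^sup>2 = ((y1*(1+(x1^2+x2^2)) - x1*(1+(y1^2+y2^2)))^2 + (y2*(1+(x1^2+x2^2)) - x2*(1+(y1^2+y2^2)))^2) / (4 * Dd^2)"
    unfolding A0 by (simp add: add_divide_distrib power_mult_distrib)
  have R: "ra\<^sup>2 = ((x1-y1)^2+(x2-y2)^2) * ((x1*(y1^2+y2^2) - y1)^2 + (x2*(y1^2+y2^2) - y2)^2) / (4 * (y1^2+y2^2) * Dd^2)"
  proof -
    have "ra\<^sup>2 = (cmod (x - y))\<^sup>2 * (cmod (x * complex_of_real ((cmod y)\<^sup>2) - y))\<^sup>2 / (4 * (cmod y)\<^sup>2 * Dd^2)"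
      unfolding hra Dd_def x1_def x2_def y1_def y2_def
      by (simp add: power_divide power_mult_distrib algebra_simps) (simp add: power2_eq_square algebra_simps)
    then show ?thesis unfolding cmod_power2 cy unfolding x1_def x2_def y1_def y2_def by simp
  qed
  define Na where "Na = (y1*(1+(x1^2+x2^2)) - x1*(1+(y1^2+y2^2)))^2 + (y2*(1+(x1^2+x2^2)) - x2*(1+(y1^2+y2^2)))^2"
  define Nr where "Nr = ((x1-y1)^2+(x2-y2)^2) * ((x1*(y1^2+y2^2) - y1)^2 + (x2*(y1^2+y2^2) - y2)^2)"
  define YY where "YY = y1^2 + y2^2"
  have poly: "Na * YY = 4 * Dd^2 * YY + Nr"
    unfolding Na_def Nr_def YY_def Dd_def by (rule poly_a)
  have YY: "YY > 0" "Dd^2 > 0" using Y Dd unfolding YY_def by auto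
  have "(cmod a)\<^sup>2 = Na * YY / (4 * YY * Dd^2)" unfolding A Na_def[symmetric] using YY by simp
  also have "\<dots> = (4 * Dd^2 * YY + Nr) / (4 * YY * Dd^2)" unfolding poly ..
  also have "\<dots> = 1 + Nr / (4 * YY * Dd^2)" using YY by (simp add: add_divide_distrib)
  finally show ?thesis unfolding R Nr_def YY_def .
qed




lemma ha_sign:
  fixes x y a :: complex
  assumes D: "Im x * Re y - Re x * Im y \<noteq> 0"
    and ha: "a = \<i> * (y * complex_of_real (1 + (cmod x)\<^sup>2) - x * complex_of_real (1 + (cmod y)\<^sup>2))
                 / complex_of_real (2 * (Im x * Re y - Re x * Im y))"
  shows "2 * cross (y - x) (a - x) * cross x y = - (1 - Re (x * cnj y)) * (cmod (x - y))\<^sup>2"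
proof -
  define Dd where "Dd = Im x * Re y - Re x * Im y"
  define X where "X = (cmod x)\<^sup>2"
  define Y where "Y = (cmod y)\<^sup>2"
  have X: "X = Re x ^2 + Im x^2" "Y = Re y ^2 + Im y^2" unfolding X_def Y_def by (simp_all add: cmod_power2)
  have Dd: "Dd \<noteq> 0" using D Dd_def by simp
  have ra: "Re a = - (Im y * (1 + X) - Im x * (1 + Y)) / (2 * Dd)"
    unfolding ha X_def[symmetric] Y_def[symmetric] Dd_def[symmetric] by (simp add: Re_divide_of_real)
  have ia: "Im a = (Re y * (1 + X) - Re x * (1 + Y)) / (2 * Dd)"
    unfolding ha X_def[symmetric] Y_def[symmetric] Dd_def[symmetric] by (simp add: Im_divide_of_real)
  have "2 * cross (y - x) (a - x) * cross x y =
     2 * ((Re y - Re x) * (Im a - Im x) - (Im y - Im x) * (Re a - Re x)) * (- Dd)"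
    unfolding cross_def Dd_def by (simp add: algebra_simps)
  also have "\<dots> = - (Re y - Re x) * (2 * Dd * Im a - 2 * Dd * Im x) + (Im y - Im x) * (2 * Dd * Re a - 2 * Dd * Re x)"
    by (simp add: algebra_simps)
  also have "\<dots> = - (Re y - Re x) * ((Re y * (1 + X) - Re x * (1 + Y)) - 2 * Dd * Im x)
      + (Im y - Im x) * (- (Im y * (1 + X) - Im x * (1 + Y)) - 2 * Dd * Re x)"
    using Dd unfolding ra ia by simp
  also have "\<dots> = - (1 - (Re x * Re y + Im x * Im y)) * ((Re x - Re y)^2 + (Im x - Im y)^2)"
    unfolding X Dd_def by algebra
  also have "\<dots> = - (1 - Re (x * cnj y)) * (cmod (x - y))\<^sup>2" by (simp add: cmod_power2)
  finally show ?thesis .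
qed




lemma bil: "Re ((p * of_real a1 + q * of_real b1) * cnj (p * of_real a2 + q * of_real b2))
   = a1 * a2 * (cmod p)\<^sup>2 + b1 * b2 * (cmod q)\<^sup>2 + (a1 * b2 + b1 * a2) * Re (p * cnj q)"
  unfolding cmod_power2 by (simp add: algebra_simps power2_eq_square)

lemma re_div2: "Re ((N / of_real c) * cnj (M / of_real d)) = Re (N * cnj M) / (c * d)"
  by (simp add: Re_divide_of_real)

lemma re_div1: "Re ((N / of_real c) * cnj a) = Re (N * cnj a) / c"
  by (simp add: Re_divide_of_real)

lemma bil1: "Re ((p * of_real a1 + q * of_real b1) * cnj a) = a1 * Re (p * cnj a) + b1 * Re (q * cnj a)"
  by (simp add: algebra_simps)

lemma re_sym: "Re (p * cnj q) = Re (q * cnj p)"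
  by (simp add: algebra_simps)

lemma re_shift: "Re ((p - a) * cnj (w - a)) = Re (p * cnj w) - Re (p * cnj a) - Re (w * cnj a) + (cmod a)\<^sup>2"
  unfolding cmod_power2 by (simp add: algebra_simps power2_eq_square)

lemma norm_div_sq: "(cmod (N / of_real c))\<^sup>2 = (cmod N)\<^sup>2 / c\<^sup>2"
  by (simp add: norm_divide power_divide)

lemma cross_comb: "cross (y - x) (of_real \<tau> * ((y * of_real b1 + x * of_real b2) / of_real c) - x)
   = cross x y * (1 - \<tau> * (b1 + b2) / c)"
  unfolding cross_def by (simp add: Re_divide_of_real Im_divide_of_real algebra_simps add_divide_distrib diff_divide_distrib)

lemma nsq: "(cmod z)\<^sup>2 = Re (z * cnj z)"
  using arg_cong[OF complex_norm_square[of z], of Re] by simp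

lemma sq_less1: "0 \<le> (r::real) \<Longrightarrow> r < 1 \<Longrightarrow> r\<^sup>2 < 1"
  by (simp add: abs_square_less_1)

theorem lemma4p6:
  fixes x y a xs ys w u v s t k z :: complex and ra rw :: real
  assumes hx: "x \<in> ball 0 1" "x \<noteq> 0"
    and hy: "y \<in> ball 0 1" "y \<noteq> 0"
    and noncol: "\<not> collinear {0, x, y}"
    and hxy: "cmod x \<noteq> cmod y"
    and ha: "a = \<i> * (y * complex_of_real (1 + (cmod x)\<^sup>2) - x * complex_of_real (1 + (cmod y)\<^sup>2))
                 / complex_of_real (2 * (Im x * Re y - Re x * Im y))"
    and hra: "ra = cmod (x - y) * cmod (x * complex_of_real ((cmod y)\<^sup>2) - y)
                 / (2 * cmod y * \<bar>Re x * Im y - Im x * Re y\<bar>)"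
    and hstar: "sphere 0 1 \<inter> sphere a ra = {xs, ys}"
    and order1: "x \<in> circ_arc a ra xs y"
    and order2: "y \<in> circ_arc a ra x ys"
    and hw: "w \<in> line_through x y" "w \<in> line_through (inv_pt x) (inv_pt y)"
    and hu: "u \<in> line_through x (inv_pt y)" "u \<in> line_through y (inv_pt x)"
    and hv: "v \<in> line_through x xs" "v \<in> line_through y ys"
    and hs: "s \<in> line_through x ys" "s \<in> line_through y xs"
    and ht: "t \<in> line_through xs (inv_pt y)" "t \<in> line_through ys (inv_pt x)"
    and hk: "k \<in> line_through xs (inv_pt x)" "k \<in> line_through ys (inv_pt y)"
    and hrw: "orthogonal_circles w rw a ra"
    and hz: "z \<in> sphere w rw" "z \<in> sphere a ra" "z \<in> ball 0 1"
  shows "(orthogonal_circles w rw 0 1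
          \<and> z \<in> circ_arc a ra x y \<and> hrho x z = hrho z y
          \<and> w = (y * complex_of_real (1 - (cmod x)\<^sup>2) - x * complex_of_real (1 - (cmod y)\<^sup>2))
                / complex_of_real ((cmod y)\<^sup>2 - (cmod x)\<^sup>2)
          \<and> rw = cmod (x - y) * sqrt ((1 - (cmod x)\<^sup>2) * (1 - (cmod y)\<^sup>2))
                / \<bar>(cmod y)\<^sup>2 - (cmod x)\<^sup>2\<bar>)
       \<and> (v \<in> line_through 0 z \<and> s \<in> line_through 0 z \<and> t \<in> line_through 0 z
          \<and> k \<in> line_through 0 z
          \<and> u \<in> line_through 0 z \<and> u \<in> line_through xs ys
          \<and> u = (y * complex_of_real (1 - (cmod x)\<^sup>2) + x * complex_of_real (1 - (cmod y)\<^sup>2))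
                / complex_of_real (1 - (cmod x)\<^sup>2 * (cmod y)\<^sup>2))"

proof -
  define X where "X = (cmod x)\<^sup>2"
  define Y where "Y = (cmod y)\<^sup>2"
  define P where "P = Re (x * cnj y)"
  define Dd where "Dd = Im x * Re y - Re x * Im y"
  have x0: "0 < cmod x" "cmod x < 1" using hx by auto
  have y0: "0 < cmod y" "cmod y < 1" using hy by auto
  have X0: "0 < X" "X < 1" unfolding X_def using x0 by (auto intro: sq_less1)
  have Y0: "0 < Y" "Y < 1" unfolding Y_def using y0 by (auto intro: sq_less1)
  have XY: "X \<noteq> Y" unfolding X_def Y_def using hxy by (simp add: power2_eq_iff_nonneg)
  have Dd: "Dd \<noteq> 0"
  proof
    assume D0: "Dd = 0"
    have "Im (y / x) = 0" using D0 unfolding Dd_def by (simp add: Im_divide algebra_simps)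
    then have "y / x \<in> \<real>" by (simp add: complex_is_Real_iff)
    then have "collinear {0, x, y}" by (simp add: collinear_iff_Reals)
    with noncol show False by simp
  qed
  have Dd': "Im x * Re y - Re x * Im y \<noteq> 0" using Dd Dd_def by simp
  have cxy: "cross x y = - Dd" by (simp add: cross_def Dd_def)
  have ax: "Re (x * cnj a) = (1 + X) / 2" using a_facts(1)[OF Dd' ha] X_def by simp
  have ay: "Re (y * cnj a) = (1 + Y) / 2" using a_facts(2)[OF Dd' ha] Y_def by simp
  have a2: "(cmod a)\<^sup>2 = 1 + ra\<^sup>2" using a_sq[OF Dd' hy(2) ha hra] .
  have xney: "x \<noteq> y" using hxy by auto
  have ra0: "ra > 0"
  proof -
    have "x * complex_of_real ((cmod y)\<^sup>2) \<noteq> y"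
    proof
      assume h: "x * complex_of_real ((cmod y)\<^sup>2) = y"
      have "cmod x * (cmod y)\<^sup>2 = cmod y" using arg_cong[OF h, of cmod] by (simp add: norm_mult norm_power)
      then have "cmod x * cmod y = 1" using y0 by (simp add: power2_eq_square)
      moreover have "cmod x * cmod y < 1 * 1" by (rule mult_strict_mono') (use x0 y0 in auto)
      ultimately show False by simp
    qed
    moreover have "\<bar>Re x * Im y - Im x * Re y\<bar> > 0" using Dd unfolding Dd_def by auto
    ultimately show ?thesis unfolding hra using xney y0 by (auto intro!: divide_pos_pos mult_pos_pos)
  qed
  have xa: "cmod (x - a) = ra" using on_C[OF a2 ra0 ax[unfolded X_def]] .
  have ya: "cmod (y - a) = ra" using on_C[OF a2 ra0 ay[unfolded Y_def]] .
  define xi where "xi = inv_pt x"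
  define yi where "yi = inv_pt y"
  have xin: "cmod xi = 1 / cmod x" unfolding xi_def using inv_facts(1) hx(2) by blast
  have yin: "cmod yi = 1 / cmod y" unfolding yi_def using inv_facts(1) hy(2) by blast
  have xia: "cmod (xi - a) = ra"
  proof (rule on_C[OF a2 ra0])
    have "Re (xi * cnj a) = Re (x * cnj a) / X" unfolding xi_def X_def by (rule inv_facts(2)[OF hx(2)])
    also have "\<dots> = (1 + X) / 2 / X" unfolding ax ..
    also have "\<dots> = (1 + (cmod xi)\<^sup>2) / 2" unfolding xin using x0 unfolding X_def by (simp add: field_simps power2_eq_square)
    finally show "Re (xi * cnj a) = (1 + (cmod xi)\<^sup>2) / 2" .
  qed
  have yia: "cmod (yi - a) = ra"
  proof (rule on_C[OF a2 ra0])
    have "Re (yi * cnj a) = Re (y * cnj a) / Y" unfolding yi_def Y_def by (rule inv_facts(2)[OF hy(2)])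
    also have "\<dots> = (1 + Y) / 2 / Y" unfolding ay ..
    also have "\<dots> = (1 + (cmod yi)\<^sup>2) / 2" unfolding yin using y0 unfolding Y_def by (simp add: field_simps power2_eq_square)
    finally show "Re (yi * cnj a) = (1 + (cmod yi)\<^sup>2) / 2" .
  qed
  have xin1: "cmod xi > 1" unfolding xin using x0 by simp
  have yin1: "cmod yi > 1" unfolding yin using y0 by simp
  have xiyi: "cmod xi \<noteq> cmod yi" unfolding xin yin using hxy x0 y0 by (simp add: field_simps)
  have xs1: "cmod xs = 1" "cmod (xs - a) = ra" using hstar by (auto simp: dist_norm norm_minus_commute)
  have ys1: "cmod ys = 1" "cmod (ys - a) = ra" using hstar by (auto simp: dist_norm norm_minus_commute)
  have xsa: "Re (xs * cnj a) = 1" using dist_exp[of xs a] xs1 a2 by simp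
  have ysa: "Re (ys * cnj a) = 1" using dist_exp[of ys a] ys1 a2 by simp
  have a0: "a \<noteq> 0"
  proof
    assume "a = 0"
    then have "1 + ra\<^sup>2 = 0" using a2 by simp
    moreover have "ra\<^sup>2 \<ge> 0" by simp
    ultimately show False by linarith
  qed
  have xsys: "xs \<noteq> ys"
  proof
    assume eq: "xs = ys"
    define A where "A = (cmod a)\<^sup>2"
    have A: "A = 1 + ra\<^sup>2" "A > 0" using a2 unfolding A_def by (auto simp: add_pos_nonneg)
    define e where "e = (\<lambda>r. a * Complex 1 r / of_real A)"
    have ein: "\<And>r. r\<^sup>2 = ra\<^sup>2 \<Longrightarrow> e r \<in> sphere 0 1 \<inter> sphere a ra"
    proof -
      fix r assume r: "r\<^sup>2 = ra\<^sup>2"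
      have c: "(cmod (Complex 1 r))\<^sup>2 = 1 + ra\<^sup>2" by (simp add: cmod_power2 r)
      have "(cmod (e r))\<^sup>2 = A * (cmod (Complex 1 r))\<^sup>2 / A\<^sup>2"
        unfolding e_def norm_mult norm_divide power_mult_distrib power_divide A_def[symmetric] by simp
      then have n1: "(cmod (e r))\<^sup>2 = 1" unfolding c A(1)[symmetric] using A(2) by (simp add: power2_eq_square)
      have An: "A \<noteq> 0" using A(2) by simp
      have cc: "Complex 1 r / of_real A - 1 = Complex (1 / A - 1) (r / A)"
        by (simp add: complex_eq_iff Re_divide_of_real Im_divide_of_real)
      have "e r - a = a * (Complex 1 r / of_real A - 1)" unfolding e_def by (simp add: algebra_simps)
      then have er: "e r - a = a * Complex (1 / A - 1) (r / A)" unfolding cc .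
      have "(cmod (e r - a))\<^sup>2 = A * (cmod (Complex (1 / A - 1) (r / A)))\<^sup>2"
        unfolding er norm_mult power_mult_distrib A_def ..
      also have "\<dots> = A * ((1 / A - 1)\<^sup>2 + (r / A)\<^sup>2)" by (simp only: cmod_power2 complex.sel)
      also have "\<dots> = ((A - 1)\<^sup>2 + r\<^sup>2) / A" using An by (simp add: field_simps power2_eq_square)
      also have "\<dots> = (ra\<^sup>2 * (1 + ra\<^sup>2)) / (1 + ra\<^sup>2)" unfolding r A(1) by (simp add: power2_eq_square algebra_simps)
      also have "\<dots> = ra\<^sup>2" using A(2) unfolding A(1) by simp
      finally have n2: "(cmod (e r - a))\<^sup>2 = ra\<^sup>2" .
      have "cmod (e r) = 1" using n1 power2_eq_iff_nonneg[of "cmod (e r)" 1] by simp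
      moreover have "cmod (e r - a) = ra" using n2 ra0 by (simp add: power2_eq_iff_nonneg)
      ultimately show "e r \<in> sphere 0 1 \<inter> sphere a ra" by (simp add: dist_norm norm_minus_commute)
    qed
    have "e ra \<in> {xs}" "e (- ra) \<in> {xs}" using ein[of ra] ein[of "- ra"] hstar eq by auto
    then have "e ra = e (- ra)" by simp
    then have "a * Complex 1 ra / of_real A = a * Complex 1 (- ra) / of_real A" unfolding e_def .
    moreover have nA: "complex_of_real A \<noteq> 0" using A(2) by simp
    ultimately have "a * Complex 1 ra = a * Complex 1 (- ra)" by simp
    then show False using a0 ra0 by simp
  qed
  have d1: "x \<noteq> xi" "x \<noteq> yi" "x \<noteq> xs" "x \<noteq> ys" "y \<noteq> xi" "y \<noteq> yi" "y \<noteq> xs" "y \<noteq> ys"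
    using x0 y0 xin1 yin1 xs1 ys1 by auto
  have d2: "xi \<noteq> yi" "xi \<noteq> xs" "xi \<noteq> ys" "yi \<noteq> xs" "yi \<noteq> ys"
    using xiyi xin1 yin1 xs1 ys1 by auto
  have onxsys: "\<And>p. Re (p * cnj a) = 1 \<Longrightarrow> p \<in> line_through xs ys"
  proof -
    fix p assume h: "Re (p * cnj a) = 1"
    have "\<exists>t::real. p - xs = of_real t * (ys - xs)"
      by (rule perp_par[OF a0]) (use h xsa ysa xsys in \<open>auto simp: algebra_simps\<close>)
    then show "p \<in> line_through xs ys" unfolding line_iff by (auto simp: algebra_simps)
  qed
  define W0 where "W0 = (y * complex_of_real (1 - X) - x * complex_of_real (1 - Y)) / complex_of_real (Y - X)"
  have YX: "Y - X \<noteq> 0" using XY by simp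
  have W0l1: "W0 \<in> line_through x y"
  proof -
    have "W0 = x + of_real ((1 - X) / (Y - X)) * (y - x)"
      unfolding W0_def using YX by (simp add: field_simps, (simp add: algebra_simps)?)
    then show ?thesis unfolding line_iff by blast
  qed
  have W0l2: "W0 \<in> line_through xi yi"
  proof -
    have xi: "xi = x / of_real X" unfolding xi_def inv_pt_def X_def ..
    have yi: "yi = y / of_real Y" unfolding yi_def inv_pt_def Y_def ..
    have "W0 = xi + of_real (Y * (1 - X) / (Y - X)) * (yi - xi)"
      unfolding W0_def xi yi using YX X0 Y0 by (simp add: field_simps, (simp add: algebra_simps)?)
    then show ?thesis unfolding line_iff by blast
  qed
  have wW0: "w = W0" using uniq_gen[OF ra0 xa ya xia yia d1(1) d1(2) W0l1 W0l2] hw unfolding xi_def yi_def by blast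
  have Wa: "Re (w * cnj a) = 1"
  proof -
    have "Re (w * cnj a) = ((1 - X) * Re (y * cnj a) - (1 - Y) * Re (x * cnj a)) / (Y - X)"
      unfolding wW0 W0_def re_div1 by (simp add: algebra_simps)
    also have "\<dots> = 1" unfolding ax ay using YX by (simp add: field_simps, (simp add: algebra_simps)?)
    finally show ?thesis .
  qed
  have Mn: "(cmod (y * complex_of_real (1 - X) - x * complex_of_real (1 - Y)))\<^sup>2
      = (1 - X)\<^sup>2 * Y + (1 - Y)\<^sup>2 * X - 2 * (1 - X) * (1 - Y) * P"
  proof -
    have e: "y * complex_of_real (1 - X) - x * complex_of_real (1 - Y) = y * complex_of_real (1 - X) + x * complex_of_real (Y - 1)"
      by (simp add: algebra_simps)
    have "(cmod (y * complex_of_real (1 - X) + x * complex_of_real (Y - 1)))\<^sup>2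
       = Re ((y * complex_of_real (1 - X) + x * complex_of_real (Y - 1)) * cnj (y * complex_of_real (1 - X) + x * complex_of_real (Y - 1)))"
      by (rule nsq)
    also have "\<dots> = (1 - X) * (1 - X) * Y + (Y - 1) * (Y - 1) * X + ((1 - X) * (Y - 1) + (Y - 1) * (1 - X)) * P"
      unfolding bil X_def Y_def P_def re_sym[of y x] ..
    finally show ?thesis unfolding e by (simp add: power2_eq_square algebra_simps)
  qed
  have xmy: "(cmod (x - y))\<^sup>2 = X + Y - 2 * P" using dist_exp[of x y] unfolding X_def Y_def P_def by simp
  have W0n: "(cmod w)\<^sup>2 - 1 = (cmod (x - y))\<^sup>2 * ((1 - X) * (1 - Y)) / (Y - X)\<^sup>2"
  proof -
    have "(cmod w)\<^sup>2 = ((1 - X)\<^sup>2 * Y + (1 - Y)\<^sup>2 * X - 2 * (1 - X) * (1 - Y) * P) / (Y - X)\<^sup>2"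
      unfolding wW0 W0_def norm_div_sq Mn ..
    then show ?thesis unfolding xmy using YX by (simp add: field_simps) (simp add: algebra_simps power2_eq_square)
  qed
  have rw0: "rw > 0" and wa2: "(cmod (w - a))\<^sup>2 = rw\<^sup>2 + ra\<^sup>2" using hrw unfolding orthogonal_circles_def by (auto simp: dist_norm)
  have rw2: "rw\<^sup>2 = (cmod w)\<^sup>2 - 1" using dist_exp[of w a] wa2 a2 Wa by simp
  have C1: "orthogonal_circles w rw 0 1" unfolding orthogonal_circles_def using rw0 rw2 by simp
  have C4: "w = (y * complex_of_real (1 - (cmod x)\<^sup>2) - x * complex_of_real (1 - (cmod y)\<^sup>2))
                / complex_of_real ((cmod y)\<^sup>2 - (cmod x)\<^sup>2)" using wW0 unfolding W0_def X_def Y_def .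
  have C5: "rw = cmod (x - y) * sqrt ((1 - (cmod x)\<^sup>2) * (1 - (cmod y)\<^sup>2)) / \<bar>(cmod y)\<^sup>2 - (cmod x)\<^sup>2\<bar>"
  proof -
    have pos: "(1 - X) * (1 - Y) \<ge> 0" using X0 Y0 by simp
    have "(cmod (x - y) * sqrt ((1 - X) * (1 - Y)) / \<bar>Y - X\<bar>)\<^sup>2 = rw\<^sup>2"
      unfolding rw2 W0n using pos by (simp add: power_divide power_mult_distrib)
    moreover have nn: "0 \<le> cmod (x - y) * sqrt ((1 - X) * (1 - Y)) / \<bar>Y - X\<bar>" using pos by simp
    ultimately have "rw = cmod (x - y) * sqrt ((1 - X) * (1 - Y)) / \<bar>Y - X\<bar>"
      using power2_eq_iff_nonneg[OF nn, of rw] rw0 by simp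
    then show ?thesis unfolding X_def Y_def .
  qed

  define U0 where "U0 = (y * complex_of_real (1 - X) + x * complex_of_real (1 - Y)) / complex_of_real (1 - X * Y)"
  have XY1: "1 - X * Y > 0"
  proof -
    have "X * Y < 1 * 1" by (rule mult_strict_mono') (use X0 Y0 in auto)
    then show ?thesis by simp
  qed
  have c1: "(1::complex) - of_real X * of_real Y \<noteq> 0"
  proof -
    have "complex_of_real (1 - X * Y) \<noteq> 0" unfolding of_real_eq_0_iff using XY1 by simp
    then show ?thesis by simp
  qed
  have c2: "complex_of_real Y - complex_of_real X * (complex_of_real Y * complex_of_real Y) \<noteq> 0"
  proof -
    have "complex_of_real (Y * (1 - X * Y)) \<noteq> 0" unfolding of_real_eq_0_iff using XY1 Y0 by simp
    then show ?thesis by (simp add: algebra_simps)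
  qed
  have c3: "complex_of_real X - complex_of_real Y * (complex_of_real X * complex_of_real X) \<noteq> 0"
  proof -
    have "complex_of_real (X * (1 - X * Y)) \<noteq> 0" unfolding of_real_eq_0_iff using XY1 X0 by simp
    then show ?thesis by (simp add: algebra_simps)
  qed
  have c4: "complex_of_real X - complex_of_real X * (complex_of_real X * complex_of_real Y) \<noteq> 0"
  proof -
    have "complex_of_real (X * (1 - X * Y)) \<noteq> 0" unfolding of_real_eq_0_iff using XY1 X0 by simp
    then show ?thesis by (simp add: algebra_simps)
  qed
  have c5: "complex_of_real Y - complex_of_real X * (complex_of_real Y * complex_of_real Y) \<noteq> 0" using c2 .
  have U0l1: "U0 \<in> line_through x yi"
  proof -
    have yi: "yi = y / of_real Y" unfolding yi_def inv_pt_def Y_def ..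
    have "U0 = x + of_real ((1 - X) * Y / (1 - X * Y)) * (yi - x)"
      unfolding U0_def yi using XY1 Y0 c1 c2 by (simp add: field_simps, (simp add: algebra_simps)?)
    then show ?thesis unfolding line_iff by blast
  qed
  have U0l2: "U0 \<in> line_through y xi"
  proof -
    have xi: "xi = x / of_real X" unfolding xi_def inv_pt_def X_def ..
    have "U0 = y + of_real ((1 - Y) * X / (1 - X * Y)) * (xi - y)"
      unfolding U0_def xi using XY1 X0 c1 c3 c4 by (simp add: field_simps, (simp add: algebra_simps)?)
    then show ?thesis unfolding line_iff by blast
  qed
  have uU0: "u = U0" using uniq_gen[OF ra0 xa yia ya xia xney d1(1) U0l1 U0l2] hu unfolding xi_def yi_def by blast
  have Ua: "Re (U0 * cnj a) = 1"
  proof -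
    have "Re (U0 * cnj a) = ((1 - X) * Re (y * cnj a) + (1 - Y) * Re (x * cnj a)) / (1 - X * Y)"
      unfolding U0_def re_div1 bil1 by (simp add: algebra_simps)
    also have "\<dots> = 1" unfolding ax ay using XY1 by (simp add: field_simps, (simp add: algebra_simps)?)
    finally show ?thesis .
  qed
  have Uw: "Re (U0 * cnj w) = 1"
  proof -
    have e: "y * complex_of_real (1 - X) - x * complex_of_real (1 - Y) = y * complex_of_real (1 - X) + x * complex_of_real (Y - 1)"
      by (simp add: algebra_simps)
    have "Re (U0 * cnj w) = ((1 - X) * (1 - X) * Y + (1 - Y) * (Y - 1) * X + ((1 - X) * (Y - 1) + (1 - Y) * (1 - X)) * P) / ((1 - X * Y) * (Y - X))"
      unfolding U0_def wW0 W0_def re_div2 e unfolding bil X_def Y_def P_def re_sym[of y x] ..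
    also have "\<dots> = ((1 - X * Y) * (Y - X)) / ((1 - X * Y) * (Y - X))"
      by (rule arg_cong[where f="\<lambda>t. t / _"]) algebra
    also have "\<dots> = 1" using XY1 YX by simp
    finally show ?thesis .
  qed
  have U0n: "(cmod U0)\<^sup>2 = ((1 - X)\<^sup>2 * Y + (1 - Y)\<^sup>2 * X + 2 * (1 - X) * (1 - Y) * P) / (1 - X * Y)\<^sup>2"
  proof -
    have "(cmod (y * complex_of_real (1 - X) + x * complex_of_real (1 - Y)))\<^sup>2
       = Re ((y * complex_of_real (1 - X) + x * complex_of_real (1 - Y)) * cnj (y * complex_of_real (1 - X) + x * complex_of_real (1 - Y)))"
      by (rule nsq)
    also have "\<dots> = (1 - X) * (1 - X) * Y + (1 - Y) * (1 - Y) * X + ((1 - X) * (1 - Y) + (1 - Y) * (1 - X)) * P"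
      unfolding bil X_def Y_def P_def re_sym[of y x] ..
    finally show ?thesis unfolding U0_def norm_div_sq by (simp add: power2_eq_square algebra_simps)
  qed
  have U00: "U0 \<noteq> 0" using Ua by auto
  have C7: "u \<in> line_through xs ys" using onxsys Ua uU0 by simp
  have C8: "u = (y * complex_of_real (1 - (cmod x)\<^sup>2) + x * complex_of_real (1 - (cmod y)\<^sup>2))
                / complex_of_real (1 - (cmod x)\<^sup>2 * (cmod y)\<^sup>2)" using uU0 unfolding U0_def X_def Y_def .
  have wl: "w \<in> line_through xs ys" using onxsys Wa by simp
  have z1: "cmod (z - w) = rw" "cmod (z - a) = ra" "cmod z < 1" using hz by (auto simp: dist_norm norm_minus_commute)
  have aw: "a \<noteq> w" using wa2 rw0 by auto
  have zperp: "Re (z * cnj (a - w)) = 0"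
  proof -
    have "Re (z * cnj w) = ((cmod z)\<^sup>2 + 1) / 2" using dist_exp[of z w] z1(1) rw2 by simp
    moreover have "Re (z * cnj a) = ((cmod z)\<^sup>2 + 1) / 2" using dist_exp[of z a] z1(2) a2 by simp
    ultimately show ?thesis by (simp add: algebra_simps)
  qed
  have Uperp: "Re (U0 * cnj (a - w)) = 0" using Ua Uw by (simp add: algebra_simps)
  obtain \<tau> where tau: "z = of_real \<tau> * U0" using perp_par[of "a - w" z U0] aw zperp Uperp U00 by auto
  define U2 where "U2 = (cmod U0)\<^sup>2"
  have qt: "\<tau>\<^sup>2 * U2 - 2 * \<tau> + 1 = 0"
  proof -
    have "(cmod z)\<^sup>2 = \<tau>\<^sup>2 * U2" unfolding tau U2_def by (simp add: norm_mult power_mult_distrib)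
    moreover have "Re (z * cnj a) = \<tau> * Re (U0 * cnj a)" unfolding tau by (simp add: algebra_simps)
    ultimately show ?thesis using dist_exp[of z a] z1(2) a2 Ua by simp
  qed
  have tin: "\<tau>\<^sup>2 * U2 < 1"
  proof -
    have "(cmod z)\<^sup>2 = \<tau>\<^sup>2 * U2" unfolding tau U2_def by (simp add: norm_mult power_mult_distrib)
    then show ?thesis using z1(3) sq_less1[of "cmod z"] by simp
  qed
  have tpos: "\<tau> > 0"
  proof -
    have "\<tau>\<^sup>2 * U2 \<ge> 0" unfolding U2_def by simp
    then show ?thesis using qt by linarith
  qed
  define K where "K = (1 - X * Y) / (2 - X - Y)"
  have K0: "2 - X - Y > 0" using X0 Y0 by simp
  have xmyp: "(cmod (x - y))\<^sup>2 > 0" using xney by simp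
  have qK: "K\<^sup>2 * U2 - 2 * K + 1 < 0"
  proof -
    have "K\<^sup>2 * U2 - 2 * K + 1 = ((1 - X)\<^sup>2 * Y + (1 - Y)\<^sup>2 * X + 2 * (1 - X) * (1 - Y) * P
        - 2 * (1 - X * Y) * (2 - X - Y) + (2 - X - Y)\<^sup>2) / (2 - X - Y)\<^sup>2"
    proof -
      define N2 where "N2 = (1 - X)\<^sup>2 * Y + (1 - Y)\<^sup>2 * X + 2 * (1 - X) * (1 - Y) * P"
      have "K\<^sup>2 * U2 = N2 / (2 - X - Y)\<^sup>2" unfolding K_def U2_def U0n N2_def[symmetric]
        using K0 XY1 by (simp add: power_divide)
      moreover have "2 * K = 2 * (1 - X * Y) * (2 - X - Y) / (2 - X - Y)\<^sup>2" unfolding K_def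
        using K0 by (simp add: power2_eq_square)
      moreover have "(1::real) = (2 - X - Y)\<^sup>2 / (2 - X - Y)\<^sup>2" using K0 by simp
      ultimately have "K\<^sup>2 * U2 - 2 * K + 1 = N2 / (2 - X - Y)\<^sup>2 - 2 * (1 - X * Y) * (2 - X - Y) / (2 - X - Y)\<^sup>2
          + (2 - X - Y)\<^sup>2 / (2 - X - Y)\<^sup>2" by simp
      also have "\<dots> = (N2 - 2 * (1 - X * Y) * (2 - X - Y) + (2 - X - Y)\<^sup>2) / (2 - X - Y)\<^sup>2"
        by (simp only: add_divide_distrib diff_divide_distrib)
      finally show ?thesis unfolding N2_def .
    qed
    also have "\<dots> = - ((1 - X) * (1 - Y) * (X + Y - 2 * P)) / (2 - X - Y)\<^sup>2"
      by (simp add: algebra_simps power2_eq_square)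
    also have "\<dots> < 0" using xmyp X0 Y0 K0 unfolding xmy by (simp add: divide_neg_pos)
    finally show ?thesis .
  qed
  have tK: "\<tau> < K"
  proof (rule ccontr)
    assume "\<not> \<tau> < K"
    then have Kt: "K \<le> \<tau>" by simp
    have "(K - \<tau>) * (U2 * (K + \<tau>) - 2) < 0" using qK qt by (simp add: algebra_simps power2_eq_square)
    then have "(K - \<tau> > 0 \<and> U2 * (K + \<tau>) - 2 < 0) \<or> (K - \<tau> < 0 \<and> U2 * (K + \<tau>) - 2 > 0)"
      by (simp add: mult_less_0_iff)
    then have Kt': "K < \<tau>" and g: "U2 * (K + \<tau>) > 2" using Kt by auto
    have "2 = U2 * \<tau> + 1 / \<tau>" using qt tpos by (simp add: field_simps power2_eq_square)
    moreover have "U2 * K \<le> U2 * \<tau>" using Kt' unfolding U2_def by (simp add: mult_left_mono)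
    moreover have "U2 * (K + \<tau>) = U2 * K + U2 * \<tau>" by (simp add: distrib_left)
    ultimately have "U2 * \<tau> > 1 / \<tau>" using g by linarith
    then have "U2 * \<tau> * \<tau> > 1" using tpos by (simp add: field_simps)
    then show False using tin by (simp add: power2_eq_square algebra_simps)
  qed
  have hzs: "cross (y - x) (z - x) * cross x y > 0"
  proof -
    have "cross (y - x) (z - x) = cross x y * (1 - \<tau> * ((1 - X) + (1 - Y)) / (1 - X * Y))"
      unfolding tau U0_def by (rule cross_comb)
    moreover have "1 - \<tau> * ((1 - X) + (1 - Y)) / (1 - X * Y) > 0"
      using tK XY1 K0 unfolding K_def by (simp add: field_simps)
    moreover have "cross x y * cross x y > 0" using cxy Dd by (auto simp: zero_less_mult_iff linorder_neq_iff)
    ultimately show ?thesis by (metis mult.assoc mult.commute mult_pos_pos)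
  qed
  have hap: "cross (y - x) (a - x) * cross x y < 0"
  proof -
    have "P < 1"
    proof -
      have "P \<le> cmod (x * cnj y)" unfolding P_def by (rule complex_Re_le_cmod)
      also have "\<dots> = cmod x * cmod y" by (simp add: norm_mult)
      also have "\<dots> < 1 * 1" by (rule mult_strict_mono') (use x0 y0 in auto)
      finally show ?thesis by simp
    qed
    then have pos: "(1 - P) * (cmod (x - y))\<^sup>2 > 0" using xmyp by simp
    have "2 * (cross (y - x) (a - x) * cross x y) = - ((1 - P) * (cmod (x - y))\<^sup>2)"
      using ha_sign[OF Dd' ha] unfolding P_def by (simp only: mult.assoc mult_minus_left)
    then show ?thesis using pos by linarith
  qed
  have ca: "cross (x - a) (y - a) = cross (y - x) (a - x)" unfolding cross_def by (simp add: algebra_simps)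
  have C2: "z \<in> circ_arc a ra x y"
  proof -
    have side: "cross ((y - a) - (x - a)) ((z - a) - (x - a)) * cross (x - a) (y - a) < 0"
    proof -
      have "(cross (y - x) (z - x) * cross x y) * (cross (y - x) (a - x) * cross x y) < 0"
        by (rule mult_pos_neg[OF hzs hap])
      then have pr: "(cross (y - x) (z - x) * cross (y - x) (a - x)) * (cross x y * cross x y) < 0"
        by (simp add: mult_ac)
      have cc: "cross x y * cross x y > 0" using cxy Dd by (auto simp: zero_less_mult_iff linorder_neq_iff)
      have t: "cross (y - x) (z - x) * cross (y - x) (a - x) < 0"
      proof (rule ccontr)
        assume "\<not> ?thesis"
        then have "cross (y - x) (z - x) * cross (y - x) (a - x) \<ge> 0" by simp
        then have "(cross (y - x) (z - x) * cross (y - x) (a - x)) * (cross x y * cross x y) \<ge> 0"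
          using cc by simp
        then show False using pr by simp
      qed
      have e1: "(y - a) - (x - a) = y - x" "(z - a) - (x - a) = z - x" by simp_all
      show ?thesis unfolding e1 ca using t .
    qed
    have cne: "cross (x - a) (y - a) \<noteq> 0" using hap ca by auto
    obtain \<alpha> \<beta> where ab: "\<alpha> \<ge> 0" "\<beta> \<ge> 0" "z - a = of_real \<alpha> * (x - a) + of_real \<beta> * (y - a)"
      using cone_side[OF ra0 xa ya z1(2) cne side] by blast
    show ?thesis unfolding circ_arc_def using ab hz(2) by auto
  qed
  have C3: "hrho x z = hrho z y"
  proof -
    define Z where "Z = (cmod z)\<^sup>2"
    have Z1: "Z < 1" "0 \<le> Z" unfolding Z_def using z1(3) sq_less1[of "cmod z"] by auto
    have zw: "Z - 2 * Re (z * cnj w) + 1 = 0" using dist_exp[of z w] z1(1) rw2 unfolding Z_def by simp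
    have wX: "(X - Y) * Re (z * cnj w) = (1 - Y) * Re (z * cnj x) - (1 - X) * Re (z * cnj y)"
    proof -
      have "(X - Y) * Re (z * cnj w) = Re (z * cnj (w * of_real (X - Y)))" by (simp add: algebra_simps)
      also have "w * of_real (X - Y) = x * of_real (1 - Y) - y * of_real (1 - X)"
        unfolding wW0 W0_def using YX by (simp add: field_simps)
      finally show ?thesis by (simp add: algebra_simps)
    qed
    have key: "(cmod (x - z))\<^sup>2 * (1 - Y) = (cmod (z - y))\<^sup>2 * (1 - X)"
    proof -
      have fA: "(cmod (x - z))\<^sup>2 = X - 2 * Re (z * cnj x) + Z" using dist_exp[of x z] re_sym[of x z]
        unfolding X_def Z_def by simp
      have fB: "(cmod (z - y))\<^sup>2 = Z - 2 * Re (z * cnj y) + Y" using dist_exp[of z y]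
        unfolding Y_def Z_def by simp
      have "(cmod (x - z))\<^sup>2 * (1 - Y) - (cmod (z - y))\<^sup>2 * (1 - X)
          = (X - Y) * (1 + Z) - 2 * ((1 - Y) * Re (z * cnj x) - (1 - X) * Re (z * cnj y))"
        unfolding fA fB by (simp add: algebra_simps)
      also have "\<dots> = (X - Y) * (Z - 2 * Re (z * cnj w) + 1)" unfolding wX[symmetric] by (simp add: algebra_simps)
      also have "\<dots> = 0" unfolding zw by simp
      finally show ?thesis by simp
    qed
    have k2: "cmod (x - z) * sqrt (1 - Y) = cmod (z - y) * sqrt (1 - X)"
    proof -
      have "(cmod (x - z) * sqrt (1 - Y))\<^sup>2 = (cmod (z - y) * sqrt (1 - X))\<^sup>2"
        using key X0 Y0 by (simp add: power_mult_distrib)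
      then show ?thesis using X0 Y0 by (simp add: power2_eq_iff_nonneg)
    qed
    have "cmod (x - z) / (sqrt (1 - (cmod x)\<^sup>2) * sqrt (1 - (cmod z)\<^sup>2))
        = cmod (z - y) / (sqrt (1 - (cmod z)\<^sup>2) * sqrt (1 - (cmod y)\<^sup>2))"
      unfolding X_def[symmetric] Y_def[symmetric] Z_def[symmetric] using k2 X0 Y0 Z1
      by (simp add: field_simps)
    then show ?thesis unfolding hrho_def by simp
  qed
  have onl: "\<And>p. Re (p * cnj (a - w)) = 0 \<Longrightarrow> p \<in> line_through 0 z"
  proof -
    fix p assume h: "Re (p * cnj (a - w)) = 0"
    obtain t where t: "p = of_real t * U0" using perp_par[of "a - w" p U0] aw h Uperp U00 by auto
    have "p = 0 + of_real (t / \<tau>) * (z - 0)" unfolding t tau using tpos by simp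
    then show "p \<in> line_through 0 z" unfolding line_iff by blast
  qed
  have pol: "\<And>p. Re ((p - a) * cnj (w - a)) = ra\<^sup>2 \<Longrightarrow> p \<in> line_through 0 z"
  proof -
    fix p assume h: "Re ((p - a) * cnj (w - a)) = ra\<^sup>2"
    have "Re (p * cnj (a - w)) = 0" using h unfolding re_shift a2 using Wa by (simp add: algebra_simps)
    then show "p \<in> line_through 0 z" by (rule onl)
  qed
  have wl2: "w \<in> line_through xi yi" using hw unfolding xi_def yi_def by simp
  have Cv: "v \<in> line_through 0 z"
    by (rule pol, rule polar_gen[OF ra0 xa ya xs1(2) ys1(2) xney d1(3) d1(4) d1(7) d1(8) xsys hw(1) wl hv])
  have Cs: "s \<in> line_through 0 z"
    by (rule pol, rule polar_gen[OF ra0 xa ya ys1(2) xs1(2) xney d1(4) d1(3) d1(8) d1(7) xsys[symmetric] hw(1) line_sym[OF wl] hs])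
  have Ct: "t \<in> line_through 0 z"
    by (rule pol, rule polar_gen[OF ra0 xs1(2) ys1(2) yia xia xsys d2(4)[symmetric] d2(2)[symmetric] d2(5)[symmetric] d2(3)[symmetric] d2(1)[symmetric] wl line_sym[OF wl2]])
      (use ht in \<open>simp_all add: xi_def yi_def\<close>)
  have Ck: "k \<in> line_through 0 z"
    by (rule pol, rule polar_gen[OF ra0 xs1(2) ys1(2) xia yia xsys d2(2)[symmetric] d2(4)[symmetric] d2(3)[symmetric] d2(5)[symmetric] d2(1) wl wl2])
      (use hk in \<open>simp_all add: xi_def yi_def\<close>)
  have Cu: "u \<in> line_through 0 z" using onl Uperp uU0 by simp
  show ?thesis using C1 C2 C3 C4 C5 Cv Cs Ct Ck Cu C7 C8 by blast
qed


end
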